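(* Let $T$ be a near-truss and let $I$ be a paragon in $T$ that is a maximal left ideal. Then the quotient near-truss $T/I$ has no ideals other than singleton sets and $T/I$ itself.
   Context: A heap is a set with a ternary operation $[-,-,-]$ satisfying $[a_1,a_2,[a_3,a_4,a_5]]=[[a_1,a_2,a_3],a_4,a_5]$ and $[a,a,b]=b=[b,a,a]$. A near-truss is a heap with an associative multiplication satisfying $a[b,c,d]=[ab,ac,ad]$. A normal sub-heap is a non-empty subset $S$ closed under $[-,-,-]$ with $[[a,e,s],a,e]\in S$ for all $a$ and $e,s\in S$; $a\sim_S b$ iff $[a,b,s]\in S$ for some (equivalently all) $s\in S$. A sub-heap $S$ is closed if $[ts',ts,s]\in S$ and $[s't,st,s]\in S$ for all $s,s'\in S$, $t$. A paragon is a non-empty normal sub-heap $P$ all of whose $\sim_P$-classes are closed; then $T/P$ is a near-truss with $\bar a\bar b=\overline{ab}$. A left ideal is a normal sub-heap $I$ with $ti\in I$ for all $t$, $i\in I$; an ideal additionally satisfies $it\in I$. A left ideal $I\neq T$ is maximal if it is not contained in any left ideal other than itself and $T$. *)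

theory Defs
  imports Main
begin

definition heap :: "'a set \<Rightarrow> ('a \<Rightarrow> 'a \<Rightarrow> 'a \<Rightarrow> 'a) \<Rightarrow> bool" where
  "heap T h \<longleftrightarrow>
     (\<forall>a\<in>T. \<forall>b\<in>T. \<forall>c\<in>T. h a b c \<in> T) \<and>
     (\<forall>a1\<in>T. \<forall>a2\<in>T. \<forall>a3\<in>T. \<forall>a4\<in>T. \<forall>a5\<in>T.
        h a1 a2 (h a3 a4 a5) = h (h a1 a2 a3) a4 a5) \<and>
     (\<forall>a\<in>T. \<forall>b\<in>T. h a a b = b \<and> h b a a = b)"

definition near_truss :: "'a set \<Rightarrow> ('a \<Rightarrow> 'a \<Rightarrow> 'a \<Rightarrow> 'a) \<Rightarrow> ('a \<Rightarrow> 'a \<Rightarrow> 'a) \<Rightarrow> bool" where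
  "near_truss T h m \<longleftrightarrow> heap T h \<and>
     (\<forall>a\<in>T. \<forall>b\<in>T. m a b \<in> T) \<and>
     (\<forall>a\<in>T. \<forall>b\<in>T. \<forall>c\<in>T. m (m a b) c = m a (m b c)) \<and>
     (\<forall>a\<in>T. \<forall>b\<in>T. \<forall>c\<in>T. \<forall>d\<in>T. m a (h b c d) = h (m a b) (m a c) (m a d))"

definition subheap :: "'a set \<Rightarrow> ('a \<Rightarrow> 'a \<Rightarrow> 'a \<Rightarrow> 'a) \<Rightarrow> 'a set \<Rightarrow> bool" where
  "subheap T h S \<longleftrightarrow> S \<noteq> {} \<and> S \<subseteq> T \<and> (\<forall>a\<in>S. \<forall>b\<in>S. \<forall>c\<in>S. h a b c \<in> S)"

definition normal_subheap :: "'a set \<Rightarrow> ('a \<Rightarrow> 'a \<Rightarrow> 'a \<Rightarrow> 'a) \<Rightarrow> 'a set \<Rightarrow> bool" where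
  "normal_subheap T h S \<longleftrightarrow> subheap T h S \<and>
     (\<forall>a\<in>T. \<forall>e\<in>S. \<forall>s\<in>S. h (h a e s) a e \<in> S)"

definition heap_rel :: "'a set \<Rightarrow> ('a \<Rightarrow> 'a \<Rightarrow> 'a \<Rightarrow> 'a) \<Rightarrow> 'a set \<Rightarrow> ('a \<times> 'a) set" where
  "heap_rel T h S = {(a, b). a \<in> T \<and> b \<in> T \<and> (\<exists>s\<in>S. h a b s \<in> S)}"

definition hclass :: "'a set \<Rightarrow> ('a \<Rightarrow> 'a \<Rightarrow> 'a \<Rightarrow> 'a) \<Rightarrow> 'a set \<Rightarrow> 'a \<Rightarrow> 'a set" where
  "hclass T h S a = heap_rel T h S `` {a}"

definition closed_subheap :: "'a set \<Rightarrow> ('a \<Rightarrow> 'a \<Rightarrow> 'a \<Rightarrow> 'a) \<Rightarrow> ('a \<Rightarrow> 'a \<Rightarrow> 'a) \<Rightarrow> 'a set \<Rightarrow> bool" where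
  "closed_subheap T h m S \<longleftrightarrow> subheap T h S \<and>
     (\<forall>s\<in>S. \<forall>s'\<in>S. \<forall>t\<in>T. h (m t s') (m t s) s \<in> S \<and> h (m s' t) (m s t) s \<in> S)"

definition paragon :: "'a set \<Rightarrow> ('a \<Rightarrow> 'a \<Rightarrow> 'a \<Rightarrow> 'a) \<Rightarrow> ('a \<Rightarrow> 'a \<Rightarrow> 'a) \<Rightarrow> 'a set \<Rightarrow> bool" where
  "paragon T h m P \<longleftrightarrow> normal_subheap T h P \<and>
     (\<forall>a\<in>T. closed_subheap T h m (hclass T h P a))"

definition left_ideal :: "'a set \<Rightarrow> ('a \<Rightarrow> 'a \<Rightarrow> 'a \<Rightarrow> 'a) \<Rightarrow> ('a \<Rightarrow> 'a \<Rightarrow> 'a) \<Rightarrow> 'a set \<Rightarrow> bool" where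
  "left_ideal T h m I \<longleftrightarrow> normal_subheap T h I \<and> (\<forall>t\<in>T. \<forall>i\<in>I. m t i \<in> I)"

definition ideal :: "'a set \<Rightarrow> ('a \<Rightarrow> 'a \<Rightarrow> 'a \<Rightarrow> 'a) \<Rightarrow> ('a \<Rightarrow> 'a \<Rightarrow> 'a) \<Rightarrow> 'a set \<Rightarrow> bool" where
  "ideal T h m I \<longleftrightarrow> left_ideal T h m I \<and> (\<forall>t\<in>T. \<forall>i\<in>I. m i t \<in> I)"

definition maximal_left_ideal :: "'a set \<Rightarrow> ('a \<Rightarrow> 'a \<Rightarrow> 'a \<Rightarrow> 'a) \<Rightarrow> ('a \<Rightarrow> 'a \<Rightarrow> 'a) \<Rightarrow> 'a set \<Rightarrow> bool" where
  "maximal_left_ideal T h m I \<longleftrightarrow> left_ideal T h m I \<and> I \<noteq> T \<and>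
     (\<forall>J. left_ideal T h m J \<and> I \<subseteq> J \<longrightarrow> J = I \<or> J = T)"

text \<open>Quotient T/P: carrier is the set of \<open>\<sim>_P\<close>-classes; operations act on
(arbitrary chosen) representatives, which is well defined when P is a paragon.\<close>

definition qcarrier :: "'a set \<Rightarrow> ('a \<Rightarrow> 'a \<Rightarrow> 'a \<Rightarrow> 'a) \<Rightarrow> 'a set \<Rightarrow> 'a set set" where
  "qcarrier T h P = T // heap_rel T h P"

definition qrep :: "'a set \<Rightarrow> 'a" where
  "qrep A = (SOME a. a \<in> A)"

definition qheap :: "'a set \<Rightarrow> ('a \<Rightarrow> 'a \<Rightarrow> 'a \<Rightarrow> 'a) \<Rightarrow> 'a set \<Rightarrow>
    'a set \<Rightarrow> 'a set \<Rightarrow> 'a set \<Rightarrow> 'a set" where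
  "qheap T h P A B C = hclass T h P (h (qrep A) (qrep B) (qrep C))"

definition qmult :: "'a set \<Rightarrow> ('a \<Rightarrow> 'a \<Rightarrow> 'a \<Rightarrow> 'a) \<Rightarrow> ('a \<Rightarrow> 'a \<Rightarrow> 'a) \<Rightarrow> 'a set \<Rightarrow>
    'a set \<Rightarrow> 'a set \<Rightarrow> 'a set" where
  "qmult T h m P A B = hclass T h P (m (qrep A) (qrep B))"

end

theory Submission
  imports Defs
begin

locale hp =
  fixes T :: "'a set" and h :: "'a \<Rightarrow> 'a \<Rightarrow> 'a \<Rightarrow> 'a"
  assumes H: "heap T h"
begin

lemma cl[simp]: "a\<in>T \<Longrightarrow> b\<in>T \<Longrightarrow> c\<in>T \<Longrightarrow> h a b c \<in> T"
  using H unfolding heap_def by blast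

lemma id1[simp]: "a\<in>T \<Longrightarrow> b\<in>T \<Longrightarrow> h a a b = b"
  using H unfolding heap_def by blast

lemma id2[simp]: "a\<in>T \<Longrightarrow> b\<in>T \<Longrightarrow> h b a a = b"
  using H unfolding heap_def by blast

lemma A: "a1\<in>T \<Longrightarrow> a2\<in>T \<Longrightarrow> a3\<in>T \<Longrightarrow> a4\<in>T \<Longrightarrow> a5\<in>T \<Longrightarrow>
   h a1 a2 (h a3 a4 a5) = h (h a1 a2 a3) a4 a5"
  using H unfolding heap_def by blast

lemma R1[simp]: "a\<in>T \<Longrightarrow> b\<in>T \<Longrightarrow> c\<in>T \<Longrightarrow> d\<in>T \<Longrightarrow> e\<in>T \<Longrightarrow>
   h a b (h c d e) = h (h a b c) d e"
  by (rule A)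

lemma R4[simp]: "x\<in>T \<Longrightarrow> b\<in>T \<Longrightarrow> a\<in>T \<Longrightarrow> c\<in>T \<Longrightarrow> h (h x b a) a c = h x b c"
  using A[of x b a a c] by simp

lemma R2[simp]: assumes "a\<in>T" "b\<in>T" "c\<in>T" "d\<in>T" "e\<in>T"
  shows "h a (h b c d) e = h (h a d c) b e"
proof -
  let ?y = "h b c d"
  have y: "?y \<in> T" using assms by simp
  have 1: "h ?y d (h c b e) = e"
  proof -
    have "h ?y d (h c b e) = h b c (h d d (h c b e))" using A[of b c d d "h c b e"] assms by simp
    also have "\<dots> = h b c (h c b e)" using assms by simp
    also have "\<dots> = h (h b c c) b e" using A[of b c c b e] assms by simp
    also have "\<dots> = e" using assms by simp
    finally show ?thesis .
  qed
  have "h a ?y e = h a ?y (h ?y d (h c b e))" using 1 by simp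
  also have "\<dots> = h (h a ?y ?y) d (h c b e)" using A[of a ?y ?y d "h c b e"] assms y by simp
  also have "\<dots> = h a d (h c b e)" using assms y by simp
  also have "\<dots> = h (h a d c) b e" using A[of a d c b e] assms by simp
  finally show ?thesis .
qed

lemma test: "a\<in>T \<Longrightarrow> b\<in>T \<Longrightarrow> c\<in>T \<Longrightarrow> c'\<in>T \<Longrightarrow> s\<in>T \<Longrightarrow>
  h (h a b c) (h a b c') s = h (h (h a b s) s (h c c' s)) (h a b s) s" by simp

lemma test2: "a\<in>T \<Longrightarrow> b\<in>T \<Longrightarrow> c\<in>T \<Longrightarrow> b'\<in>T \<Longrightarrow> s\<in>T \<Longrightarrow>
  h (h a b c)(h a b' c) s = h (h (h a b s) s (h b' b s)) (h a b s) s" by simp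

end

locale pq = hp T h for T :: "'a set" and h +
  fixes m :: "'a \<Rightarrow> 'a \<Rightarrow> 'a" and I :: "'a set"
  assumes NT: "near_truss T h m" and PG: "paragon T h m I"
begin

abbreviation "R \<equiv> heap_rel T h I"

lemma mT[simp]: "a\<in>T \<Longrightarrow> b\<in>T \<Longrightarrow> m a b \<in> T"
  using NT unfolding near_truss_def by blast

lemma distr: "a\<in>T \<Longrightarrow> b\<in>T \<Longrightarrow> c\<in>T \<Longrightarrow> d\<in>T \<Longrightarrow> m a (h b c d) = h (m a b) (m a c) (m a d)"
  using NT unfolding near_truss_def by blast

lemma IT: "I \<subseteq> T" and Ine: "I \<noteq> {}"
  and Icl: "a\<in>I \<Longrightarrow> b\<in>I \<Longrightarrow> c\<in>I \<Longrightarrow> h a b c \<in> I"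
  and Inorm: "t\<in>T \<Longrightarrow> e\<in>I \<Longrightarrow> s\<in>I \<Longrightarrow> h (h t e s) t e \<in> I"
  using PG unfolding paragon_def normal_subheap_def subheap_def by blast+

lemma Rall: "(a,b) \<in> R \<Longrightarrow> s\<in>I \<Longrightarrow> h a b s \<in> I"
proof -
  assume r: "(a,b) \<in> R" and s: "s \<in> I"
  then obtain s0 where s0: "s0 \<in> I" "h a b s0 \<in> I" "a\<in>T" "b\<in>T" unfolding heap_rel_def by auto
  have "h (h a b s0) s0 s \<in> I" using Icl s0 s by blast
  then show ?thesis using s0 s IT by (simp add: subset_iff)
qed

lemma RI: "a\<in>T \<Longrightarrow> b\<in>T \<Longrightarrow> s\<in>I \<Longrightarrow> h a b s \<in> I \<Longrightarrow> (a,b) \<in> R"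
  unfolding heap_rel_def by blast

lemma RT: "(a,b) \<in> R \<Longrightarrow> a \<in> T \<and> b \<in> T"
  unfolding heap_rel_def by blast

lemma EQ: "equiv T R"
proof (rule equivI)
  show "R \<subseteq> T \<times> T" unfolding heap_rel_def by blast
  show "refl_on T R"
  proof (rule refl_onI)
    fix x assume x: "x\<in>T"
    obtain s where s: "s\<in>I" using Ine by blast
    then show "(x,x) \<in> R" using x IT by (intro RI[of x x s]) auto
  qed
  show "sym R"
  proof (rule symI)
    fix a b assume r: "(a,b) \<in> R"
    obtain s where s: "s\<in>I" using Ine by blast
    have "h s (h a b s) s \<in> I" using Icl s Rall[OF r s] by blast
    then show "(b,a) \<in> R" using RT[OF r] s IT by (intro RI[of b a s]) (auto simp: subset_iff)
  qed
  show "trans R"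
  proof (rule transI)
    fix a b c assume r: "(a,b) \<in> R" and r2: "(b,c) \<in> R"
    obtain s where s: "s\<in>I" using Ine by blast
    have "h (h a b s) s (h b c s) \<in> I" using Icl s Rall[OF r s] Rall[OF r2 s] by blast
    then show "(a,c) \<in> R" using RT[OF r] RT[OF r2] s IT by (intro RI[of a c s]) (auto simp: subset_iff)
  qed
qed

lemma Rsym: "(a,b) \<in> R \<Longrightarrow> (b,a) \<in> R" using EQ unfolding equiv_def sym_def by blast
lemma Rtrans: "(a,b) \<in> R \<Longrightarrow> (b,c) \<in> R \<Longrightarrow> (a,c) \<in> R" using EQ unfolding equiv_def trans_def by blast
lemma Rrefl: "a \<in> T \<Longrightarrow> (a,a) \<in> R" using EQ unfolding equiv_def refl_on_def by blast

lemma compat_h: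
  assumes ra: "(a,a') \<in> R" and rb: "(b,b') \<in> R" and rc: "(c,c') \<in> R"
  shows "(h a b c, h a' b' c') \<in> R"
proof -
  obtain s where s: "s\<in>I" using Ine by blast
  have sT: "s \<in> T" using s IT by blast
  note T = RT[OF ra] RT[OF rb] RT[OF rc]
  have 1: "(h a b c, h a b c') \<in> R"
  proof -
    have i: "h (h (h a b s) s (h c c' s)) (h a b s) s \<in> I"
      using Inorm[of "h a b s" s "h c c' s"] s sT T Rall[OF rc s] by simp
    have eq: "h (h a b c) (h a b c') s = h (h (h a b s) s (h c c' s)) (h a b s) s"
      using T sT by simp
    have "h (h a b c) (h a b c') s \<in> I" using i by (simp only: eq)
    then show ?thesis using T sT s by (intro RI[of _ _ s]) auto
  qed
  have 2: "(h a b c', h a b' c') \<in> R"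
  proof -
    have i: "h (h (h a b s) s (h b' b s)) (h a b s) s \<in> I"
      using Inorm[of "h a b s" s "h b' b s"] s sT T Rall[OF Rsym[OF rb] s] by simp
    have eq: "h (h a b c') (h a b' c') s = h (h (h a b s) s (h b' b s)) (h a b s) s"
      using T sT by simp
    have "h (h a b c') (h a b' c') s \<in> I" using i by (simp only: eq)
    then show ?thesis using T sT s by (intro RI[of _ _ s]) auto
  qed
  have 3: "(h a b' c', h a' b' c') \<in> R"
  proof -
    have "h (h a b' c') (h a' b' c') s \<in> I" using T sT Rall[OF ra s] by simp
    then show ?thesis using T sT s by (intro RI[of _ _ s]) auto
  qed
  show ?thesis using 1 2 3 Rtrans by blast
qed

lemma cls_R: "(a,b) \<in> R \<Longrightarrow> b \<in> hclass T h I a" unfolding hclass_def by blast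
lemma R_cls: "b \<in> hclass T h I a \<Longrightarrow> (a,b) \<in> R" unfolding hclass_def by blast

lemma compat_m:
  assumes ra: "(a,a') \<in> R" and rb: "(b,b') \<in> R"
  shows "(m a b, m a' b') \<in> R"
proof -
  obtain s where s: "s\<in>I" using Ine by blast
  have sT: "s \<in> T" using s IT by blast
  note T = RT[OF ra] RT[OF rb]
  have CL: "\<And>x. x\<in>T \<Longrightarrow> \<forall>u\<in>hclass T h I x. \<forall>u'\<in>hclass T h I x. \<forall>t\<in>T.
       h (m t u') (m t u) u \<in> hclass T h I x \<and> h (m u' t) (m u t) u \<in> hclass T h I x"
    using PG unfolding paragon_def closed_subheap_def by blast
  have bb: "b \<in> hclass T h I b" using cls_R[OF Rrefl] T by blast
  have aa: "a \<in> hclass T h I a" using cls_R[OF Rrefl] T by blast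
  have "h (m a' b') (m a' b) b \<in> hclass T h I b"
    using CL[of b] cls_R[OF rb] bb T by blast
  then have "(h (m a' b') (m a' b) b, b) \<in> R" using Rsym R_cls by blast
  then have "h (h (m a' b') (m a' b) b) b s \<in> I" using Rall s by blast
  then have "h (m a' b') (m a' b) s \<in> I" using T sT by simp
  then have "(m a' b', m a' b) \<in> R" using T s sT by (intro RI[of _ _ s]) auto
  then have 1: "(m a' b, m a' b') \<in> R" by (rule Rsym)
  have "h (m a' b) (m a b) a \<in> hclass T h I a"
    using CL[of a] cls_R[OF ra] aa T by blast
  then have "(h (m a' b) (m a b) a, a) \<in> R" using Rsym R_cls by blast
  then have "h (h (m a' b) (m a b) a) a s \<in> I" using Rall s by blast
  then have "h (m a' b) (m a b) s \<in> I" using T sT by simp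
  then have "(m a' b, m a b) \<in> R" using T s sT by (intro RI[of _ _ s]) auto
  then have 2: "(m a b, m a' b) \<in> R" by (rule Rsym)
  show ?thesis using 1 2 Rtrans by blast
qed

lemma cls_eq: "a\<in>T \<Longrightarrow> b\<in>T \<Longrightarrow> hclass T h I a = hclass T h I b \<longleftrightarrow> (a,b) \<in> R"
  unfolding hclass_def using eq_equiv_class_iff[OF EQ] by blast

lemma rep_rel: "a\<in>T \<Longrightarrow> (a, qrep (hclass T h I a)) \<in> R"
proof -
  assume a: "a\<in>T"
  have "a \<in> hclass T h I a" using cls_R[OF Rrefl[OF a]] .
  then have "qrep (hclass T h I a) \<in> hclass T h I a" unfolding qrep_def by (rule someI)
  then show ?thesis by (rule R_cls)
qed

lemma qheap_cls: "a\<in>T \<Longrightarrow> b\<in>T \<Longrightarrow> c\<in>T \<Longrightarrow>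
  qheap T h I (hclass T h I a) (hclass T h I b) (hclass T h I c) = hclass T h I (h a b c)"
proof -
  assume T: "a\<in>T" "b\<in>T" "c\<in>T"
  have "(h (qrep (hclass T h I a)) (qrep (hclass T h I b)) (qrep (hclass T h I c)), h a b c) \<in> R"
    using compat_h[OF Rsym[OF rep_rel] Rsym[OF rep_rel] Rsym[OF rep_rel]] T by blast
  then show ?thesis unfolding qheap_def using cls_eq RT by blast
qed

lemma qmult_cls: "a\<in>T \<Longrightarrow> b\<in>T \<Longrightarrow>
  qmult T h m I (hclass T h I a) (hclass T h I b) = hclass T h I (m a b)"
proof -
  assume T: "a\<in>T" "b\<in>T"
  have "(m (qrep (hclass T h I a)) (qrep (hclass T h I b)), m a b) \<in> R"
    using compat_m[OF Rsym[OF rep_rel] Rsym[OF rep_rel]] T by blast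
  then show ?thesis unfolding qmult_def using cls_eq RT by blast
qed

lemma qcarrier_iff: "A \<in> qcarrier T h I \<longleftrightarrow> (\<exists>a\<in>T. A = hclass T h I a)"
  unfolding qcarrier_def hclass_def by (auto elim: quotientE intro: quotientI)

end

theorem lemma3p23:
  fixes T :: "'a set" and h :: "'a \<Rightarrow> 'a \<Rightarrow> 'a \<Rightarrow> 'a" and m :: "'a \<Rightarrow> 'a \<Rightarrow> 'a"
    and I :: "'a set"
  assumes "near_truss T h m"
    and "paragon T h m I"
    and "maximal_left_ideal T h m I"
  shows "\<forall>J. ideal (qcarrier T h I) (qheap T h I) (qmult T h m I) J \<longrightarrow>
           (\<exists>x. J = {x}) \<or> J = qcarrier T h I"
proof (intro allI impI)
  fix J
  assume J: "ideal (qcarrier T h I) (qheap T h I) (qmult T h m I) J"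
  interpret pq T h m I
    using assms(1,2) by unfold_locales (auto simp: near_truss_def)
  let ?Q = "qcarrier T h I"
  let ?cl = "hclass T h I"
  have Jne: "J \<noteq> {}" and JQ: "J \<subseteq> ?Q"
    and Jcl: "\<And>A B C. A\<in>J \<Longrightarrow> B\<in>J \<Longrightarrow> C\<in>J \<Longrightarrow> qheap T h I A B C \<in> J"
    and Jnorm: "\<And>A E S. A\<in>?Q \<Longrightarrow> E\<in>J \<Longrightarrow> S\<in>J \<Longrightarrow> qheap T h I (qheap T h I A E S) A E \<in> J"
    and Jmul: "\<And>A B. A\<in>?Q \<Longrightarrow> B\<in>J \<Longrightarrow> qmult T h m I A B \<in> J"
    using J unfolding ideal_def left_ideal_def normal_subheap_def subheap_def
    by (meson, meson, meson, meson, meson)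
  have clQ: "\<And>a. a\<in>T \<Longrightarrow> ?cl a \<in> ?Q" using qcarrier_iff by blast
  define J' where "J' = {a\<in>T. ?cl a \<in> J}"
  have J'T: "\<And>a. a \<in> J' \<Longrightarrow> a \<in> T" unfolding J'_def by blast
  have Jh: "\<And>a b c. a\<in>J' \<Longrightarrow> b\<in>J' \<Longrightarrow> c\<in>J' \<Longrightarrow> h a b c \<in> J'"
  proof -
    fix a b c assume "a\<in>J'" "b\<in>J'" "c\<in>J'"
    then have T: "a\<in>T" "b\<in>T" "c\<in>T" "?cl a \<in> J" "?cl b \<in> J" "?cl c \<in> J" unfolding J'_def by auto
    then have "qheap T h I (?cl a) (?cl b) (?cl c) \<in> J" using Jcl by blast
    then show "h a b c \<in> J'" unfolding J'_def using T by (simp add: qheap_cls)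
  qed
  have Jrel: "\<And>a b. a\<in>J' \<Longrightarrow> (a,b) \<in> R \<Longrightarrow> b \<in> J'"
  proof -
    fix a b assume "a\<in>J'" "(a,b) \<in> R"
    then have T: "a\<in>T" "b\<in>T" "?cl a \<in> J" unfolding J'_def using RT by auto
    have "?cl b = ?cl a" using cls_eq[OF T(2,1)] Rsym \<open>(a,b) \<in> R\<close> by blast
    then show "b \<in> J'" unfolding J'_def using T by simp
  qed
  have Jm: "\<And>t a. t\<in>T \<Longrightarrow> a\<in>J' \<Longrightarrow> m t a \<in> J'"
  proof -
    fix t a assume "t\<in>T" "a\<in>J'"
    then have T: "t\<in>T" "a\<in>T" "?cl a \<in> J" unfolding J'_def by auto
    then have "qmult T h m I (?cl t) (?cl a) \<in> J" using Jmul clQ by blast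
    then show "m t a \<in> J'" unfolding J'_def using T by (simp add: qmult_cls)
  qed
  have Jn: "\<And>t a b. t\<in>T \<Longrightarrow> a\<in>J' \<Longrightarrow> b\<in>J' \<Longrightarrow> h (h t a b) t a \<in> J'"
  proof -
    fix t a b assume t: "t\<in>T" and ab: "a\<in>J'" "b\<in>J'"
    then have T: "a\<in>T" "b\<in>T" "?cl a \<in> J" "?cl b \<in> J" unfolding J'_def by auto
    have "qheap T h I (qheap T h I (?cl t) (?cl a) (?cl b)) (?cl t) (?cl a) \<in> J"
      using Jnorm clQ t T by blast
    then have "?cl (h (h t a b) t a) \<in> J" using t T by (simp add: qheap_cls)
    then show "h (h t a b) t a \<in> J'" unfolding J'_def using t T by simp
  qed
  obtain A where A: "A \<in> J" using Jne by blast
  then obtain x where x: "x\<in>T" "A = ?cl x" using JQ qcarrier_iff by blast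
  have xJ: "x \<in> J'" unfolding J'_def using x A by blast
  obtain e where e: "e \<in> I" using Ine by blast
  have eT: "e \<in> T" using e IT by blast
  have Ileft: "left_ideal T h m I" and Imax: "\<And>K. left_ideal T h m K \<Longrightarrow> I \<subseteq> K \<Longrightarrow> K = I \<or> K = T"
    using assms(3) unfolding maximal_left_ideal_def by blast+
  have IJ: "\<And>i. i \<in> I \<Longrightarrow> h i e x \<in> J'"
  proof -
    fix i assume i: "i \<in> I"
    have iT: "i \<in> T" using i IT by blast
    have "h (h i e x) x e \<in> I" using i iT eT x by simp
    then have "(h i e x, x) \<in> R" using iT eT x e by (intro RI[of _ _ e]) auto
    then show "h i e x \<in> J'" using xJ Jrel Rsym by blast
  qed
  define N where "N = {t\<in>T. h t e x \<in> J'}"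
  have IN: "I \<subseteq> N" unfolding N_def using IJ IT by blast
  have NT: "N \<subseteq> T" unfolding N_def by blast
  have Nli: "left_ideal T h m N"
    unfolding left_ideal_def normal_subheap_def subheap_def
  proof (intro conjI ballI)
    show "N \<noteq> {}" using IN e by blast
    show "N \<subseteq> T" by (rule NT)
  next
    fix a b c assume abc: "a\<in>N" "b\<in>N" "c\<in>N"
    then have T: "a\<in>T" "b\<in>T" "c\<in>T" using NT by blast+
    have "h (h a e x) (h b e x) (h c e x) \<in> J'" using abc Jh unfolding N_def by blast
    moreover have "h (h a e x) (h b e x) (h c e x) = h (h a b c) e x" using T eT x by simp
    ultimately show "h a b c \<in> N" unfolding N_def using T by simp
  next
    fix t n n' assume t: "t\<in>T" and nn: "n\<in>N" "n'\<in>N"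
    then have T: "n\<in>T" "n'\<in>T" using NT by blast+
    have "h (h (h t e x) (h n e x) (h n' e x)) (h t e x) (h n e x) \<in> J'"
    proof -
      have "h n e x \<in> J'" "h n' e x \<in> J'" using nn unfolding N_def by auto
      moreover have "h t e x \<in> T" using t eT x by simp
      ultimately show ?thesis using Jn by blast
    qed
    moreover have "h (h (h t e x) (h n e x) (h n' e x)) (h t e x) (h n e x) = h (h (h t n n') t n) e x"
      using T t eT x by simp
    ultimately show "h (h t n n') t n \<in> N" unfolding N_def using T t by simp
  next
    fix t n assume t: "t\<in>T" and n: "n\<in>N"
    then have nT: "n\<in>T" using NT by blast
    have te: "m t e \<in> I" using Ileft t e unfolding left_ideal_def by blast
    have teT: "m t e \<in> T" using t eT by simp
    have 1: "h (m t n) (m t e) (m t x) \<in> J'"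
      using Jm[OF t, of "h n e x"] n distr[OF t nT eT x(1)] unfolding N_def by simp
    have 2: "m t x \<in> J'" using Jm t xJ by blast
    have 3: "h (m t e) e x \<in> J'" using IJ te by blast
    have "h (h (m t n) (m t e) (m t x)) (m t x) (h (m t e) e x) \<in> J'" using 1 2 3 Jh by blast
    moreover have "h (h (m t n) (m t e) (m t x)) (m t x) (h (m t e) e x) = h (m t n) e x"
      using t nT eT x teT by simp
    ultimately show "m t n \<in> N" unfolding N_def using t nT by simp
  qed
  from Imax[OF Nli IN] show "(\<exists>y. J = {y}) \<or> J = ?Q"
  proof
    assume NI: "N = I"
    have "J = {?cl x}"
    proof
      show "{?cl x} \<subseteq> J" using A x by blast
      show "J \<subseteq> {?cl x}"
      proof
        fix B assume B: "B \<in> J"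
        then obtain a where a: "a\<in>T" "B = ?cl a" using JQ qcarrier_iff by blast
        have aJ: "a \<in> J'" unfolding J'_def using a B by blast
        have "h (h a x e) e x = a" using a x eT by simp
        then have "h a x e \<in> N" unfolding N_def using aJ a x eT by simp
        then have "h a x e \<in> I" using NI by blast
        then have "(a,x) \<in> R" using a x e by (intro RI[of _ _ e]) auto
        then show "B \<in> {?cl x}" using a x cls_eq by blast
      qed
    qed
    then show ?thesis by blast
  next
    assume NT': "N = T"
    have "?Q \<subseteq> J"
    proof
      fix B assume "B \<in> ?Q"
      then obtain t where t: "t\<in>T" "B = ?cl t" using qcarrier_iff by blast
      have "h t x e \<in> N" using NT' t x eT by simp
      then have "h (h t x e) e x \<in> J'" unfolding N_def by blast
      moreover have "h (h t x e) e x = t" using t x eT by simp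
      ultimately show "B \<in> J" using t unfolding J'_def by simp
    qed
    then show ?thesis using JQ by blast
  qed
qed

end
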